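(* Let $F:[0,1]^{N}\times[0,1]\to\mathbb{R}$ be a non-constant analytic function, and let $M\in\mathbb{N}$ be such that for every $\mathbf{x}\in[0,1]^{N}$ and every $\delta>0$ the set $\mathcal{F}_{\mathbf{x},\delta}$ is a union of at most $M$ intervals. Then for all $(\epsilon,\delta)\in A$ and all $\mathbf{x}\in\Sigma_{\epsilon}$, \[ 1-\left|\mathcal{F}_{\mathbf{x},\delta}\right|\leq\epsilon(M+1). \]
   Context: $\mathcal{F}_{\mathbf{x},\delta}=\{t\in[0,1]:|F(\mathbf{x},t)|\geq\delta\}$; $|\cdot|$ is Lebesgue measure. $\Sigma=\{\mathbf{x}\in[0,1]^{N}:F(\mathbf{x},t)=0\ \forall t\in[0,1]\}$, $\Sigma_{\epsilon}=\{\mathbf{x}\in[0,1]^{N}:\operatorname{dist}(\mathbf{x},\Sigma)\geq\epsilon\}$ (with $\Sigma_\epsilon=[0,1]^N$ if $\Sigma=\emptyset$). $A=\{(\epsilon,\delta)\in(0,1]^{2}:\ \forall\mathbf{x}\in\Sigma_{\epsilon},\ \forall\xi\in[0,1],\ (\xi-\tfrac{\epsilon}{2},\xi+\tfrac{\epsilon}{2})\cap\mathcal{F}_{\mathbf{x},\delta}\neq\emptyset\}$. *)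

theory Defs
  imports "HOL-Analysis.Analysis"
begin

definition unit_cube :: "(real^'n) set" where
  "unit_cube = {x. \<forall>i. 0 \<le> x $ i \<and> x $ i \<le> 1}"

text \<open>Real-analytic functions on a Euclidean space: locally given by an
(unconditionally, i.e. absolutely) convergent multivariate power series,
with coordinates taken along the standard basis.\<close>
definition real_analytic_on_open :: "('a::euclidean_space \<Rightarrow> real) \<Rightarrow> 'a set \<Rightarrow> bool" where
  "real_analytic_on_open G U \<longleftrightarrow>
     (\<forall>p\<in>U. \<exists>r>0. \<exists>c :: ('a \<Rightarrow> nat) \<Rightarrow> real.
        \<forall>y\<in>ball p r.
          ((\<lambda>\<alpha>. c \<alpha> * (\<Prod>b\<in>Basis. ((y - p) \<bullet> b) ^ (\<alpha> b))) has_sum G y)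
            {\<alpha>. \<forall>b. b \<notin> Basis \<longrightarrow> \<alpha> b = 0})"

text \<open>Analytic on an arbitrary (e.g. closed) set S: the restriction to S of a
function analytic on an open neighbourhood of S.\<close>
definition real_analytic_on :: "('a::euclidean_space \<Rightarrow> real) \<Rightarrow> 'a set \<Rightarrow> bool" where
  "real_analytic_on F S \<longleftrightarrow>
     (\<exists>G U. open U \<and> S \<subseteq> U \<and> (\<forall>z\<in>S. G z = F z) \<and> real_analytic_on_open G U)"

definition Fset :: "((real^'n) \<times> real \<Rightarrow> real) \<Rightarrow> real^'n \<Rightarrow> real \<Rightarrow> real set" where
  "Fset F x \<delta> = {t \<in> {0..1}. \<bar>F (x, t)\<bar> \<ge> \<delta>}"

text \<open>S is a union of at most M intervals (intervals may be empty or degenerate).\<close>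
definition union_of_at_most_intervals :: "nat \<Rightarrow> real set \<Rightarrow> bool" where
  "union_of_at_most_intervals M S \<longleftrightarrow>
     (\<exists>I :: nat \<Rightarrow> real set. (\<forall>j<M. is_interval (I j)) \<and> S = (\<Union>j<M. I j))"

definition Sigma0 :: "((real^'n) \<times> real \<Rightarrow> real) \<Rightarrow> (real^'n) set" where
  "Sigma0 F = {x \<in> unit_cube. \<forall>t\<in>{0..1}. F (x, t) = 0}"

definition Sigma_eps :: "((real^'n) \<times> real \<Rightarrow> real) \<Rightarrow> real \<Rightarrow> (real^'n) set" where
  "Sigma_eps F \<epsilon> =
     (if Sigma0 F = {} then unit_cube
      else {x \<in> unit_cube. infdist x (Sigma0 F) \<ge> \<epsilon>})"

definition Aset :: "((real^'n) \<times> real \<Rightarrow> real) \<Rightarrow> (real \<times> real) set" where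
  "Aset F = {(\<epsilon>, \<delta>). 0 < \<epsilon> \<and> \<epsilon> \<le> 1 \<and> 0 < \<delta> \<and> \<delta> \<le> 1 \<and>
      (\<forall>x\<in>Sigma_eps F \<epsilon>. \<forall>\<xi>\<in>{0..1}.
         {\<xi> - \<epsilon>/2 <..< \<xi> + \<epsilon>/2} \<inter> Fset F x \<delta> \<noteq> {})}"

end

theory Submission
  imports Defs
begin

lemma chain_measure:
  fixes T :: "real set" and \<epsilon> :: real
  assumes "T \<in> sets lebesgue" "T \<subseteq> {0..1}" "\<epsilon> > 0"
    "\<not>(\<exists>t. (\<forall>i\<le>k. t i \<in> T) \<and> (\<forall>i<k. t i + \<epsilon> \<le> t (Suc i)))"
  shows "measure lebesgue T \<le> real k * \<epsilon>"
  using assms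
proof (induction k arbitrary: T)
  case 0
  have "T = {}"
  proof (rule ccontr)
    assume "T \<noteq> {}" then obtain y where "y \<in> T" by blast
    then have "\<exists>t. (\<forall>i\<le>0. t i \<in> T) \<and> (\<forall>i<(0::nat). t i + \<epsilon> \<le> t (Suc i))"
      by (intro exI[of _ "\<lambda>_. y"]) simp
    with 0(4) show False by blast
  qed
  then show ?case by simp
next
  case (Suc k)
  show ?case
  proof (cases "T = {}")
    case True then show ?thesis using Suc.prems(3) by simp
  next
    case False
    define a where "a = Inf T"
    have bdd: "bdd_below T" using Suc.prems(2) by (meson atLeastAtMost_iff bdd_below_def subset_eq)
    define T' where "T' = T \<inter> {a+\<epsilon><..}"
    have T'm: "T' \<in> sets lebesgue" unfolding T'_def using Suc.prems(1) by auto
    have T'sub: "T' \<subseteq> {0..1}" using Suc.prems(2) T'_def by auto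
    have nochain: "\<not>(\<exists>t. (\<forall>i\<le>k. t i \<in> T') \<and> (\<forall>i<k. t i + \<epsilon> \<le> t (Suc i)))"
    proof
      assume "\<exists>t. (\<forall>i\<le>k. t i \<in> T') \<and> (\<forall>i<k. t i + \<epsilon> \<le> t (Suc i))"
      then obtain t where t1: "\<forall>i\<le>k. t i \<in> T'" and t2: "\<forall>i<k. t i + \<epsilon> \<le> t (Suc i)" by blast
      have "t 0 \<in> T'" using t1 by simp
      then have "a < t 0 - \<epsilon>" "t 0 \<in> T" unfolding T'_def by auto
      then obtain t0 where t0: "t0 \<in> T" "t0 < t 0 - \<epsilon>"
        using cInf_less_iff[OF False bdd] unfolding a_def by blast
      define u where "u = (\<lambda>i. if i = 0 then t0 else t (i - 1))"
      have "\<forall>i\<le>Suc k. u i \<in> T"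
        using t1 t0 unfolding u_def T'_def by auto
      moreover have "\<forall>i<Suc k. u i + \<epsilon> \<le> u (Suc i)"
      proof (intro allI impI)
        fix i assume "i < Suc k"
        show "u i + \<epsilon> \<le> u (Suc i)"
        proof (cases i)
          case 0 then show ?thesis using t0 unfolding u_def by simp
        next
          case (Suc j) then show ?thesis using t2 \<open>i < Suc k\<close> unfolding u_def by simp
        qed
      qed
      ultimately have "\<exists>t. (\<forall>i\<le>Suc k. t i \<in> T) \<and> (\<forall>i<Suc k. t i + \<epsilon> \<le> t (Suc i))"
        by (intro exI[of _ u]) simp
      then show False using Suc.prems(4) by simp
    qed
    have IH: "measure lebesgue T' \<le> real k * \<epsilon>"
      using Suc.IH[OF T'm T'sub Suc.prems(3) nochain] .
    have sub: "T \<subseteq> {a..a+\<epsilon>} \<union> T'"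
    proof
      fix y assume "y \<in> T"
      then have "a \<le> y" unfolding a_def using bdd by (simp add: cInf_lower)
      then show "y \<in> {a..a+\<epsilon>} \<union> T'" using \<open>y \<in> T\<close> unfolding T'_def by auto
    qed
    have fm: "{a..a+\<epsilon>} \<union> T' \<in> fmeasurable lebesgue"
      by (rule fmeasurableI2[of "{a..a+\<epsilon>} \<union> {0..1}"]) (use T'sub T'm in auto)
    have "measure lebesgue T \<le> measure lebesgue ({a..a+\<epsilon>} \<union> T')"
      by (rule measure_mono_fmeasurable[OF sub Suc.prems(1) fm])
    also have "\<dots> \<le> measure lebesgue {a..a+\<epsilon>} + measure lebesgue T'"
      by (rule measure_Un_le) (use T'm in auto)
    also have "\<dots> \<le> \<epsilon> + real k * \<epsilon>" using IH Suc.prems(3) by simp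
    finally show ?thesis by (simp add: algebra_simps)
  qed
qed


lemma chain_mono:
  fixes t :: "nat \<Rightarrow> real"
  assumes "\<forall>i<k. t i + \<epsilon> \<le> t (Suc i)" "\<epsilon> > 0" "i \<le> j" "j \<le> k"
  shows "t i \<le> t j"
  using assms
proof (induction j)
  case 0 then show ?case by simp
next
  case (Suc j)
  show ?case
  proof (cases "i = Suc j")
    case True then show ?thesis by simp
  next
    case False
    then have "t i \<le> t j" using Suc by simp
    moreover have "t j + \<epsilon> \<le> t (Suc j)" using Suc.prems by simp
    ultimately show ?thesis using Suc.prems(2) by simp
  qed
qed

theorem lemma2p2:
  fixes F :: "(real^'n) \<times> real \<Rightarrow> real" and M :: nat
  assumes analytic: "real_analytic_on F (unit_cube \<times> {0..1})"
    and nonconst: "\<exists>z1\<in>unit_cube \<times> {0..1}. \<exists>z2\<in>unit_cube \<times> {0..1}. F z1 \<noteq> F z2"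
    and intervals: "\<forall>x\<in>unit_cube. \<forall>\<delta>>0. union_of_at_most_intervals M (Fset F x \<delta>)"
  shows "\<forall>(\<epsilon>, \<delta>)\<in>Aset F. \<forall>x\<in>Sigma_eps F \<epsilon>.
           1 - measure lebesgue (Fset F x \<delta>) \<le> \<epsilon> * (real M + 1)"
proof (clarify)
  fix \<epsilon> \<delta> x
  assume A: "(\<epsilon>, \<delta>) \<in> Aset F" and xS: "x \<in> Sigma_eps F \<epsilon>"
  have ep: "\<epsilon> > 0" and dp: "\<delta> > 0" using A unfolding Aset_def by auto
  have cover: "\<forall>\<xi>\<in>{0..1}. {\<xi> - \<epsilon>/2 <..< \<xi> + \<epsilon>/2} \<inter> Fset F x \<delta> \<noteq> {}"
    using A xS unfolding Aset_def by auto
  have xU: "x \<in> unit_cube" using xS unfolding Sigma_eps_def by (auto split: if_splits)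
  define S where "S = Fset F x \<delta>"
  obtain I where I: "\<forall>j<M. is_interval (I j)" and SI: "S = (\<Union>j<M. I j)"
    using intervals xU dp unfolding union_of_at_most_intervals_def S_def by blast
  have Ssub: "S \<subseteq> {0..1}" unfolding S_def Fset_def by auto
  have "S = (\<Union>j<M. I j \<inter> {0..1})" using SI Ssub by auto
  also have "\<dots> \<in> sets lebesgue"
  proof (rule sets.finite_UN)
    fix j assume "j \<in> {..<M}"
    then have "convex (I j \<inter> {0..1})" using I is_interval_convex convex_Int convex_real_interval(5)
      by (metis lessThan_iff)
    then have "I j \<inter> {0..1} \<in> lmeasurable" by (intro measurable_convex) auto
    then show "I j \<inter> {0..1} \<in> sets lebesgue" by (simp add: fmeasurable_def)
  qed simp
  finally have Sm: "S \<in> sets lebesgue" .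
  define T where "T = {0..1} - S"
  have Tm: "T \<in> sets lebesgue" unfolding T_def using Sm by auto
  have Tsub: "T \<subseteq> {0..1}" unfolding T_def by auto
  have "1 = measure lebesgue ({0..1::real})" by simp
  also have "{0..1::real} = S \<union> T" unfolding T_def using Ssub by auto
  also have "measure lebesgue (S \<union> T) \<le> measure lebesgue S + measure lebesgue T"
    by (rule measure_Un_le[OF Sm Tm])
  finally have 1: "1 - measure lebesgue S \<le> measure lebesgue T" by simp
  show "1 - measure lebesgue (Fset F x \<delta>) \<le> \<epsilon> * (real M + 1)"
  proof (rule ccontr)
    assume "\<not> ?thesis"
    then have "\<not> measure lebesgue T \<le> real (Suc M) * \<epsilon>" using 1 unfolding S_def
      by (simp add: algebra_simps)
    then obtain t where t1: "\<forall>i\<le>Suc M. t i \<in> T" and t2: "\<forall>i<Suc M. t i + \<epsilon> \<le> t (Suc i)"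
      using chain_measure[OF Tm Tsub ep, of "Suc M"] by blast
    have "\<forall>i\<in>{..M}. \<exists>s. t i < s \<and> s < t (Suc i) \<and> s \<in> S"
    proof
      fix i assume "i \<in> {..M}"
      then have ti0: "t i \<in> T" "t (Suc i) \<in> T" "t i + \<epsilon> \<le> t (Suc i)"
        using t1 t2 by auto
      then have ti: "t i \<in> {0..1}" "t (Suc i) \<in> {0..1}" "t i + \<epsilon> \<le> t (Suc i)"
        using Tsub by blast+
      define \<xi> where "\<xi> = (t i + t (Suc i)) / 2"
      have "\<xi> \<in> {0..1}" using ti unfolding \<xi>_def by auto
      then obtain s where "s \<in> {\<xi> - \<epsilon>/2 <..< \<xi> + \<epsilon>/2}" "s \<in> S"
        using cover unfolding S_def by blast
      then show "\<exists>s. t i < s \<and> s < t (Suc i) \<and> s \<in> S" using ti unfolding \<xi>_def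
        by (intro exI[of _ s]) (auto simp: field_simps)
    qed
    then obtain s where s: "\<forall>i\<in>{..M}. t i < s i \<and> s i < t (Suc i) \<and> s i \<in> S"
      by metis
    then have "\<forall>i\<in>{..M}. \<exists>j<M. s i \<in> I j" using SI by blast
    then obtain jj where jj: "\<forall>i\<in>{..M}. jj i < M \<and> s i \<in> I (jj i)" by metis
    have "\<not> inj_on jj {..M}"
    proof
      assume "inj_on jj {..M}"
      then have "card {..M} \<le> card {..<M}" by (rule card_inj_on_le) (use jj in auto)
      then show False by simp
    qed
    then obtain i1 i2 where i12: "i1 \<in> {..M}" "i2 \<in> {..M}" "i1 \<noteq> i2" "jj i1 = jj i2"
      unfolding inj_on_def by blast
    have key: False if "a \<in> {..M}" "b \<in> {..M}" "a < b" "jj a = jj b" for a b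
    proof -
      have "t (Suc a) \<le> t b" using chain_mono[OF t2 ep, of "Suc a" b] that by simp
      moreover have "t b < s b" "s a < t (Suc a)" using s that by auto
      ultimately have le: "s a \<le> t (Suc a)" "t (Suc a) \<le> s b" by auto
      have "s a \<in> I (jj a)" using jj that(1) by blast
      moreover have "s b \<in> I (jj a)" using jj that(2) that(4) by metis
      moreover have "is_interval (I (jj a))" using I jj that by auto
      ultimately have "t (Suc a) \<in> I (jj a)" using le unfolding is_interval_1 by blast
      then have "t (Suc a) \<in> S" using SI jj that by auto
      moreover have "t (Suc a) \<in> T" using t1 that by auto
      ultimately show False unfolding T_def by auto
    qed
    show False
    proof (cases "i1 < i2")
      case True then show ?thesis using key i12 by blast
    next
      case False then have "i2 < i1" using i12 by simp
      then show ?thesis using key[of i2 i1] i12 by simp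
    qed
  qed
qed

end
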